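(* Let $q$ be a prime power and let $\mathcal{F}=(\mathcal{F}_1,\ldots,\mathcal{F}_r)$ be a flag on $\mathbb{F}_{q^n}$. Then the best friend of $\mathcal{F}$ is the intersection of the best friends of the subspaces $\mathcal{F}_1,\ldots,\mathcal{F}_r$. Moreover, if $1\in\mathcal{F}_1$, every friend of $\mathcal{F}$ is contained in $\mathcal{F}_1$.
   Context: A flag on $\mathbb{F}_{q^n}$ is a sequence $(\mathcal{F}_1,\ldots,\mathcal{F}_r)$ of $\mathbb{F}_q$-subspaces with $\{0\}\subsetneq\mathcal{F}_1\subsetneq\cdots\subsetneq\mathcal{F}_r\subsetneq\mathbb{F}_{q^n}$. A subfield $\mathbb{F}_{q^m}$ of $\mathbb{F}_{q^n}$ is a friend of an $\mathbb{F}_q$-subspace $\mathcal{U}$ if $\mathcal{U}$ is a vector space over $\mathbb{F}_{q^m}$; the best friend of $\mathcal{U}$ is its largest friend. A subfield is a friend of the flag $\mathcal{F}$ if it is a friend of every $\mathcal{F}_i$; the best friend of $\mathcal{F}$ is its largest friend. *)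

theory Defs
  imports "HOL-Computational_Algebra.Primes"
begin

text \<open>The ambient field F_{q^n} is a finite field type 'a; F_q is a subfield K of it.\<close>

definition is_subfield :: "'a::field set \<Rightarrow> bool" where
  "is_subfield S \<longleftrightarrow> 0 \<in> S \<and> 1 \<in> S \<and>
     (\<forall>x\<in>S. \<forall>y\<in>S. x + y \<in> S \<and> x * y \<in> S) \<and>
     (\<forall>x\<in>S. - x \<in> S) \<and> (\<forall>x\<in>S. x \<noteq> 0 \<longrightarrow> inverse x \<in> S)"

definition is_subspace_over :: "'a::field set \<Rightarrow> 'a set \<Rightarrow> bool" where
  "is_subspace_over S U \<longleftrightarrow> 0 \<in> U \<and> (\<forall>x\<in>U. \<forall>y\<in>U. x + y \<in> U) \<and>
     (\<forall>s\<in>S. \<forall>x\<in>U. s * x \<in> U)"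

text \<open>Subfields F_{q^m} of F_{q^n} are exactly the subfields containing F_q = K.\<close>
definition friend :: "'a::field set \<Rightarrow> 'a set \<Rightarrow> 'a set \<Rightarrow> bool" where
  "friend K U L \<longleftrightarrow> is_subfield L \<and> K \<subseteq> L \<and> is_subspace_over L U"

definition best_friend :: "'a::field set \<Rightarrow> 'a set \<Rightarrow> 'a set \<Rightarrow> bool" where
  "best_friend K U L \<longleftrightarrow> friend K U L \<and> (\<forall>L'. friend K U L' \<longrightarrow> card L' \<le> card L)"

definition is_flag :: "'a::field set \<Rightarrow> nat \<Rightarrow> (nat \<Rightarrow> 'a set) \<Rightarrow> bool" where
  "is_flag K r F \<longleftrightarrow> 1 \<le> r \<and> (\<forall>i\<in>{1..r}. is_subspace_over K (F i)) \<and>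
     {0} \<subset> F 1 \<and> (\<forall>i. 1 \<le> i \<and> i < r \<longrightarrow> F i \<subset> F (Suc i)) \<and> F r \<subset> UNIV"

definition flag_friend :: "'a::field set \<Rightarrow> nat \<Rightarrow> (nat \<Rightarrow> 'a set) \<Rightarrow> 'a set \<Rightarrow> bool" where
  "flag_friend K r F L \<longleftrightarrow> (\<forall>i\<in>{1..r}. friend K (F i) L)"

definition flag_best_friend :: "'a::field set \<Rightarrow> nat \<Rightarrow> (nat \<Rightarrow> 'a set) \<Rightarrow> 'a set \<Rightarrow> bool" where
  "flag_best_friend K r F L \<longleftrightarrow> flag_friend K r F L \<and>
     (\<forall>L'. flag_friend K r F L' \<longrightarrow> card L' \<le> card L)"

end

theory Submission
  imports Defs
begin

definition stab :: "'a::field set \<Rightarrow> 'a set" where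
  "stab U = {a. \<forall>x\<in>U. a * x \<in> U}"

lemma surj_fin:
  assumes "finite U" "f ` U \<subseteq> U" "inj_on f U" "y \<in> U"
  shows "\<exists>u\<in>U. f u = y"
proof -
  have "f ` U = U" using endo_inj_surj assms by blast
  then show ?thesis using assms(4) by force
qed

lemma neg_closed:
  fixes U :: "'a::{field,finite} set"
  assumes "is_subspace_over S U" "y \<in> U"
  shows "- y \<in> U"
proof -
  have "\<exists>u\<in>U. y + u = 0"
    by (rule surj_fin) (use assms in \<open>auto simp: is_subspace_over_def inj_on_def\<close>)
  then obtain u where "u \<in> U" "y + u = 0" by blast
  then have "u = - y" by (simp add: eq_neg_iff_add_eq_0 add.commute)
  with \<open>u \<in> U\<close> show ?thesis by simp
qed

lemma friend_stab: "friend K U L \<Longrightarrow> L \<subseteq> stab U"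
  by (auto simp: friend_def is_subspace_over_def stab_def)

lemma stab_friend:
  fixes U :: "'a::{field,finite} set"
  assumes "is_subfield K" "is_subspace_over K U"
  shows "friend K U (stab U)"
proof -
  have inv: "inverse a * x \<in> U" if "a \<in> stab U" "a \<noteq> 0" "x \<in> U" for a x
  proof -
    have "\<exists>u\<in>U. a * u = x"
      by (rule surj_fin) (use that in \<open>auto simp: stab_def inj_on_def\<close>)
    then obtain u where "u \<in> U" "a * u = x" by blast
    then show ?thesis using that(2) by (auto simp: field_simps)
  qed
  have neg: "- a * x \<in> U" if "a \<in> stab U" "x \<in> U" for a x
    using neg_closed[OF assms(2), of "a * x"] that by (auto simp: stab_def)
  have z: "0 \<in> stab U" "1 \<in> stab U" using assms(2)
    by (auto simp: stab_def is_subspace_over_def)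
  have ad: "a + b \<in> stab U" if "a \<in> stab U" "b \<in> stab U" for a b
  proof -
    have "\<forall>x\<in>U. a * x + b * x \<in> U" using that assms(2)
      unfolding stab_def is_subspace_over_def by blast
    then show ?thesis by (simp add: stab_def distrib_right)
  qed
  have mu: "a * b \<in> stab U" if "a \<in> stab U" "b \<in> stab U" for a b
    using that unfolding stab_def by (simp add: mult.assoc)
  have "is_subfield (stab U)"
    unfolding is_subfield_def
    using z ad mu inv neg by (simp add: stab_def)
  moreover have "K \<subseteq> stab U" using assms(2) by (auto simp: stab_def is_subspace_over_def)
  moreover have "is_subspace_over (stab U) U" using assms(2)
    by (auto simp: stab_def is_subspace_over_def)
  ultimately show ?thesis by (simp add: friend_def)
qed

lemma best_stab:
  fixes U :: "'a::{field,finite} set"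
  assumes "is_subfield K" "is_subspace_over K U" "best_friend K U B"
  shows "B = stab U"
proof -
  have "B \<subseteq> stab U" using assms(3) friend_stab by (auto simp: best_friend_def)
  moreover have "card (stab U) \<le> card B"
    using assms stab_friend by (auto simp: best_friend_def)
  ultimately show ?thesis by (simp add: card_seteq)
qed

theorem corollary3p18:
  fixes K :: "'a::{field,finite} set" and q n r :: nat and F :: "nat \<Rightarrow> 'a set"
    and B :: "nat \<Rightarrow> 'a set"
  assumes "\<exists>p k. prime p \<and> 0 < k \<and> q = p ^ k"
    and "is_subfield K" and "card K = q" and "card (UNIV :: 'a set) = q ^ n"
    and "is_flag K r F"
    and "\<forall>i\<in>{1..r}. best_friend K (F i) (B i)"
  shows "flag_best_friend K r F (\<Inter>i\<in>{1..r}. B i) \<and>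
         (1 \<in> F 1 \<longrightarrow> (\<forall>L. flag_friend K r F L \<longrightarrow> L \<subseteq> F 1))"
proof -
  have r: "1 \<le> r" and sub: "\<And>i. i \<in> {1..r} \<Longrightarrow> is_subspace_over K (F i)"
    using assms(5) by (auto simp: is_flag_def)
  have Bs: "\<And>i. i \<in> {1..r} \<Longrightarrow> B i = stab (F i)"
    using best_stab assms(2,6) sub by blast
  let ?I = "\<Inter>i\<in>{1..r}. B i"
  have fr: "\<And>i. i \<in> {1..r} \<Longrightarrow> friend K (F i) (B i)"
    using assms(6) by (auto simp: best_friend_def)
  have ne: "{1..r} \<noteq> {}" using r by auto
  have sf: "\<And>i. i \<in> {1..r} \<Longrightarrow> is_subfield (B i)" using fr by (simp add: friend_def)
  have "is_subfield ?I"
    unfolding is_subfield_def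
  proof (intro conjI ballI impI)
    show "0 \<in> ?I" "1 \<in> ?I" using sf by (auto simp: is_subfield_def)
  next
    fix x y assume "x \<in> ?I" "y \<in> ?I"
    then show "x + y \<in> ?I" "x * y \<in> ?I" using sf by (auto simp: is_subfield_def)
  next
    fix x assume "x \<in> ?I"
    then show "- x \<in> ?I" using sf by (auto simp: is_subfield_def)
  next
    fix x assume "x \<in> ?I" "x \<noteq> 0"
    then show "inverse x \<in> ?I" using sf by (auto simp: is_subfield_def)
  qed
  moreover have "K \<subseteq> ?I"
  proof
    fix x assume "x \<in> K"
    then show "x \<in> ?I" using fr unfolding friend_def by blast
  qed
  moreover have "\<And>j. j \<in> {1..r} \<Longrightarrow> is_subspace_over ?I (F j)"
  proof -
    fix j assume j: "j \<in> {1..r}"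
    then have "is_subspace_over (B j) (F j)" using fr by (auto simp: friend_def)
    moreover have "?I \<subseteq> B j" using j by blast
    ultimately show "is_subspace_over ?I (F j)" by (auto simp: is_subspace_over_def)
  qed
  ultimately have ff: "flag_friend K r F ?I" by (auto simp: flag_friend_def friend_def)
  have "\<And>L. flag_friend K r F L \<Longrightarrow> L \<subseteq> ?I"
  proof -
    fix L assume "flag_friend K r F L"
    then have "\<And>i. i \<in> {1..r} \<Longrightarrow> L \<subseteq> B i"
      using friend_stab Bs unfolding flag_friend_def by metis
    then show "L \<subseteq> ?I" by blast
  qed
  then have "\<And>L. flag_friend K r F L \<Longrightarrow> card L \<le> card ?I"
    by (simp add: card_mono)
  with ff have p1: "flag_best_friend K r F ?I" by (simp add: flag_best_friend_def)
  have "1 \<in> F 1 \<longrightarrow> (\<forall>L. flag_friend K r F L \<longrightarrow> L \<subseteq> F 1)"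
  proof (intro impI allI subsetI)
    fix L l assume "1 \<in> F 1" "flag_friend K r F L" "l \<in> L"
    then have "friend K (F 1) L" using r by (auto simp: flag_friend_def)
    then show "l \<in> F 1" using \<open>1 \<in> F 1\<close> \<open>l \<in> L\<close>
      unfolding friend_def is_subspace_over_def by (metis mult.right_neutral)
  qed
  with p1 show ?thesis by blast
qed

end
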